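(* Let $\alpha\in\mathbb{N}$, let $m$ be a positive odd integer with $m>6\alpha+2$, and let $\mathbb{S}=\langle 6,6\alpha+2,m\rangle$. Define $\beta_1=6\,x_1$, $\beta_2=(6\alpha+2)\,x_2$, $\beta_3=m\,x_3$, where $x_1=\min\{x\ge1:6x\in\langle 6\alpha+2,m\rangle\}$, $x_2=\min\{x\ge1:(6\alpha+2)x\in\langle 6,m\rangle\}$, $x_3=\min\{x\ge1:mx\in\langle 6,6\alpha+2\rangle\}$. Factorizations are taken with respect to $(6,6\alpha+2,m)$. Then: (i) If $6\alpha+2<m\le 9\alpha+3$ and $3\mid m$, then $\beta_1=2m$ and its factorizations are $(0,0,2)$ and $\left(\frac{m-k(3\alpha+1)}{3},k,0\right)$ for $k\in\mathbb{N}$ with $k\le\frac{m}{3\alpha+1}$ and $3\mid m-k(3\alpha+1)$. Otherwise, $\beta_1=18\alpha+6$ and its factorizations are $(3\alpha+1,0,0)$ and $(0,3,0)$. (ii) $\beta_2=18\alpha+6$. If $6\alpha+2<m\le 9\alpha+3$ and $3\mid m$, then its factorizations are $\left(\frac{9\alpha+3-m}{3},0,2\right)$, $(3\alpha+1,0,0)$ and $(0,3,0)$. Otherwise, its factorizations are $(3\alpha+1,0,0)$ and $(0,3,0)$. (iii) $\beta_3=2m$ and its factorizations are $(0,0,2)$ and $\left(\frac{m-k(3\alpha+1)}{3},k,0\right)$ for $k\in\mathbb{N}$ with $k\le\frac{m}{3\alpha+1}$ and $3\mid m-k(3\alpha+1)$.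
   Context: $\mathbb{N}=\{0,1,2,\dots\}$. $\langle a_1,\dots,a_e\rangle$ is the set of $\mathbb{N}$-linear combinations of $a_1,\dots,a_e$. A factorization of $a\in\langle a_1,a_2,a_3\rangle$ is a tuple $(\eta_1,\eta_2,\eta_3)\in\mathbb{N}^3$ with $\eta_1a_1+\eta_2a_2+\eta_3a_3=a$. *)

theory Defs
  imports Main
begin

definition gen2 :: "nat \<Rightarrow> nat \<Rightarrow> nat set" where
  "gen2 a b = {x. \<exists>u v. x = u * a + v * b}"

definition gen3 :: "nat \<Rightarrow> nat \<Rightarrow> nat \<Rightarrow> nat set" where
  "gen3 a1 a2 a3 = {x. \<exists>u v w. x = u * a1 + v * a2 + w * a3}"

definition factorizations :: "nat \<Rightarrow> nat \<Rightarrow> nat \<Rightarrow> nat \<Rightarrow> (nat \<times> nat \<times> nat) set" where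
  "factorizations a1 a2 a3 x = {(e1, e2, e3). e1 * a1 + e2 * a2 + e3 * a3 = x}"

end

theory Submission
  imports Defs
begin


lemma F2m:
  fixes b m e1 e2 e3 :: nat
  assumes "b > 0" "odd m" "m > 2*b"
  shows "6*e1 + 2*b*e2 + m*e3 = 2*m \<longleftrightarrow> (e1=0 \<and> e2=0 \<and> e3=2) \<or> (e3=0 \<and> 3*e1 + b*e2 = m)"
proof
  assume h: "6*e1 + 2*b*e2 + m*e3 = 2*m"
  have "m*e3 \<le> m*2" using h by linarith
  hence "e3 \<le> 2" using assms by simp
  hence "e3 = 0 \<or> e3 = 1 \<or> e3 = 2" by auto
  thus "(e1=0 \<and> e2=0 \<and> e3=2) \<or> (e3=0 \<and> 3*e1 + b*e2 = m)"
  proof (elim disjE)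
    assume "e3 = 1"
    hence "m = 2*(3*e1 + b*e2)" using h by (simp add: algebra_simps)
    thus ?thesis using assms by simp
  next
    assume "e3 = 2" thus ?thesis using h assms by simp
  next
    assume "e3 = 0" thus ?thesis using h by simp
  qed
next
  assume "(e1=0 \<and> e2=0 \<and> e3=2) \<or> (e3=0 \<and> 3*e1 + b*e2 = m)"
  thus "6*e1 + 2*b*e2 + m*e3 = 2*m" by auto
qed

lemma F6b:
  fixes b m e1 e2 e3 :: nat
  assumes "b mod 3 = 1" "odd m" "m > 2*b"
  shows "6*e1 + 2*b*e2 + m*e3 = 6*b \<longleftrightarrow> (e1=b \<and> e2=0 \<and> e3=0) \<or> (e1=0 \<and> e2=3 \<and> e3=0)
     \<or> (m \<le> 3*b \<and> 3 dvd m \<and> e1 = (3*b-m) div 3 \<and> e2=0 \<and> e3=2)"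
proof
  assume h: "6*e1 + 2*b*e2 + m*e3 = 6*b"
  have "m*e3 < m*3" using h assms by linarith
  hence "e3 < 3" using assms by simp
  hence "e3 = 0 \<or> e3 = 1 \<or> e3 = 2" by auto
  thus "(e1=b \<and> e2=0 \<and> e3=0) \<or> (e1=0 \<and> e2=3 \<and> e3=0)
     \<or> (m \<le> 3*b \<and> 3 dvd m \<and> e1 = (3*b-m) div 3 \<and> e2=0 \<and> e3=2)"
  proof (elim disjE)
    assume "e3 = 1"
    hence "m = 2*(3*b - 3*e1 - b*e2)" using h by (simp add: algebra_simps)
    thus ?thesis using assms by simp
  next
    assume e3: "e3 = 2"
    hence h2: "3*e1 + b*e2 + m = 3*b" using h by simp
    have "e2 = 0"
    proof (rule ccontr)
      assume "e2 \<noteq> 0"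
      hence "b*e2 \<ge> b*1" by (intro mult_le_mono2) simp
      thus False using h2 assms by linarith
    qed
    hence "3*e1 + m = 3*b" using h2 by simp
    hence "3 dvd m" "m \<le> 3*b" "e1 = (3*b-m) div 3" by presburger+
    thus ?thesis using e3 \<open>e2 = 0\<close> by auto
  next
    assume e3: "e3 = 0"
    hence h2: "3*e1 + b*e2 = 3*b" using h by simp
    have "b*e2 \<le> b*3" using h2 by linarith
    hence "e2 \<le> 3" using assms by (cases "b = 0") auto
    hence "e2 = 0 \<or> e2 = 1 \<or> e2 = 2 \<or> e2 = 3" by auto
    thus ?thesis
    proof (elim disjE)
      assume "e2 = 1" hence "3*e1 = 2*b" using h2 by simp
      hence "(2*b) mod 3 = 0" by presburger
      thus ?thesis using assms by presburger
    next
      assume "e2 = 2" hence "3*e1 = b" using h2 by simp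
      thus ?thesis using assms by presburger
    qed (use h2 e3 in auto)
  qed
next
  assume "(e1=b \<and> e2=0 \<and> e3=0) \<or> (e1=0 \<and> e2=3 \<and> e3=0)
     \<or> (m \<le> 3*b \<and> 3 dvd m \<and> e1 = (3*b-m) div 3 \<and> e2=0 \<and> e3=2)"
  thus "6*e1 + 2*b*e2 + m*e3 = 6*b"
  proof (elim disjE)
    assume "m \<le> 3*b \<and> 3 dvd m \<and> e1 = (3*b-m) div 3 \<and> e2=0 \<and> e3=2"
    then obtain c where "m = 3*c" "c \<le> b" "e1 = b - c" "e2 = 0" "e3 = 2" by auto
    thus ?thesis by simp
  qed auto
qed


lemma divlem: "3*(e1::nat) + t = m \<longleftrightarrow> t \<le> m \<and> 3 dvd (m-t) \<and> e1 = (m-t) div 3"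
  by presburger

lemma LB1:
  fixes b m y u v :: nat
  assumes "b mod 3 = 1" "odd m" "m > 2*b" "y \<ge> 1" "6*y = u*(2*b) + v*m"
  shows "6*b \<le> 6*y \<or> (3 dvd m \<and> 2*m \<le> 6*y)"
proof (cases "v = 0")
  case True
  hence "3*y = u*b" using assms by simp
  hence "3 dvd u*b" by presburger
  moreover have "coprime 3 b" using assms
    by (metis coprime_mod_right_iff mod_mod_trivial coprime_1_right zero_neq_numeral)
  ultimately have "3 dvd u" using coprime_dvd_mult_left_iff by blast
  moreover have "u \<noteq> 0" using \<open>3*y = u*b\<close> assms(4) by (cases u) auto
  ultimately have "u \<ge> 3" by (auto dest: dvd_imp_le)
  hence "u*(2*b) \<ge> 3*(2*b)" by (intro mult_le_mono1)
  thus ?thesis using assms True by linarith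
next
  case False
  show ?thesis
  proof (cases "v = 1")
    case True
    hence "m = 2*(3*y - u*b)" using assms by (simp add: algebra_simps)
    thus ?thesis using assms by simp
  next
    case v1: False
    show ?thesis
    proof (cases "v = 2")
      case True
      hence h: "3*y = u*b + m" using assms by simp
      show ?thesis
      proof (cases "3 dvd m")
        case True thus ?thesis using h by auto
      next
        case F: False
        have "u \<noteq> 0" using h F by (metis add_0 dvd_triv_left mult_0)
        hence "u*b \<ge> 1*b" by (intro mult_le_mono1) simp
        thus ?thesis using h assms by linarith
      qed
    next
      case False
      hence "v \<ge> 3" using v1 \<open>v \<noteq> 0\<close> by auto
      hence "v*m \<ge> 3*m" by (intro mult_le_mono1)
      thus ?thesis using assms by linarith
    qed
  qed
qed

lemma LB2:
  fixes b m y u v :: nat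
  assumes "b mod 3 = 1" "odd m" "m > 2*b" "y \<ge> 1" "2*b*y = 6*u + v*m"
  shows "3 \<le> y"
proof (cases "v = 0")
  case True
  hence "b*y = 3*u" using assms by simp
  hence "3 dvd b*y" by presburger
  moreover have "coprime 3 b" using assms
    by (metis coprime_mod_right_iff mod_mod_trivial coprime_1_right zero_neq_numeral)
  ultimately have "3 dvd y" using coprime_dvd_mult_right_iff by blast
  thus ?thesis using assms by (auto dest: dvd_imp_le)
next
  case False
  show ?thesis
  proof (cases "v = 1")
    case True
    hence "m = 2*(b*y - 3*u)" using assms by (simp add: algebra_simps)
    thus ?thesis using assms by simp
  next
    case v1: False
    hence "v \<ge> 2" using False by auto
    hence "v*m \<ge> 2*m" by (intro mult_le_mono1)
    hence "2*b*y > 2*b*2" using assms by linarith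
    hence "y > 2" by simp
    thus ?thesis by simp
  qed
qed

lemma LB3:
  fixes b m y u v :: nat
  assumes "odd m" "y \<ge> 1" "m*y = 6*u + v*(2*b)"
  shows "2 \<le> y"
proof (rule ccontr)
  assume "\<not> 2 \<le> y"
  hence "y = 1" using assms by simp
  hence "m = 2*(3*u + v*b)" using assms by simp
  thus False using assms by simp
qed

lemma rep3:
  fixes \<alpha> m :: nat
  assumes "m > 6*\<alpha>+2"
  shows "\<exists>u v. 2*m = 6*u + v*(6*\<alpha>+2)"
proof -
  obtain q r where qr: "m = 3*q + r" "r < 3" by (metis mod_div_mult_eq mod_less_divisor zero_less_numeral add.commute mult.commute)
  hence "r = 0 \<or> r = 1 \<or> r = 2" by auto
  thus ?thesis
  proof (elim disjE)
    assume "r = 0" thus ?thesis using qr by (intro exI[of _ q] exI[of _ 0]) simp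
  next
    assume r: "r = 1"
    hence "q \<ge> \<alpha>" using qr assms by linarith
    thus ?thesis using qr r by (intro exI[of _ "q-\<alpha>"] exI[of _ 1]) (simp add: algebra_simps)
  next
    assume r: "r = 2"
    hence "q \<ge> 2*\<alpha>" using qr assms by linarith
    thus ?thesis using qr r by (intro exI[of _ "q-2*\<alpha>"] exI[of _ 2]) (simp add: algebra_simps)
  qed
qed

theorem theorem7:
  fixes \<alpha> m :: nat
  assumes "m > 0" and "odd m" and "m > 6 * \<alpha> + 2"
  defines "x1 \<equiv> (LEAST x::nat. x \<ge> 1 \<and> 6 * x \<in> gen2 (6 * \<alpha> + 2) m)"
      and "x2 \<equiv> (LEAST x::nat. x \<ge> 1 \<and> (6 * \<alpha> + 2) * x \<in> gen2 6 m)"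
      and "x3 \<equiv> (LEAST x::nat. x \<ge> 1 \<and> m * x \<in> gen2 6 (6 * \<alpha> + 2))"
  defines "\<beta>1 \<equiv> 6 * x1" and "\<beta>2 \<equiv> (6 * \<alpha> + 2) * x2" and "\<beta>3 \<equiv> m * x3"
  defines "F \<equiv> factorizations 6 (6 * \<alpha> + 2) m"
  defines "C \<equiv> (6 * \<alpha> + 2 < m \<and> m \<le> 9 * \<alpha> + 3 \<and> 3 dvd m)"
  defines "K \<equiv> {(0::nat, 0::nat, 2::nat)} \<union>
             {((m - k * (3 * \<alpha> + 1)) div 3, k, 0) | k.
                k * (3 * \<alpha> + 1) \<le> m \<and> 3 dvd (m - k * (3 * \<alpha> + 1))}"
  shows "(C \<longrightarrow> \<beta>1 = 2 * m \<and> F \<beta>1 = K) \<and>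
         (\<not> C \<longrightarrow> \<beta>1 = 18 * \<alpha> + 6 \<and> F \<beta>1 = {(3 * \<alpha> + 1, 0, 0), (0, 3, 0)})
       \<and> (\<beta>2 = 18 * \<alpha> + 6 \<and>
         (C \<longrightarrow> F \<beta>2 = {((9 * \<alpha> + 3 - m) div 3, 0, 2), (3 * \<alpha> + 1, 0, 0), (0, 3, 0)}) \<and>
         (\<not> C \<longrightarrow> F \<beta>2 = {(3 * \<alpha> + 1, 0, 0), (0, 3, 0)}))
       \<and> (\<beta>3 = 2 * m \<and> F \<beta>3 = K)"
proof -
  define b where "b = 3*\<alpha>+1"
  have b3: "b mod 3 = 1" by (simp add: b_def)
  have a2: "6*\<alpha>+2 = 2*b" and a6: "18*\<alpha>+6 = 6*b" and a9: "9*\<alpha>+3 = 3*b"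
    by (simp_all add: b_def)
  have mb: "m > 2*b" using assms(3) a2 by simp
  have bpos: "b > 0" by (simp add: b_def)
  have Cb: "C \<longleftrightarrow> m \<le> 3*b \<and> 3 dvd m" using mb unfolding C_def a2 a9 by auto
  have Fmem: "(e1,e2,e3) \<in> F N \<longleftrightarrow> 6*e1 + 2*b*e2 + m*e3 = N" for N e1 e2 e3
    by (simp add: F_def factorizations_def b_def algebra_simps)
  have Keq: "K = {(0,0,2)} \<union> {((m - k*b) div 3, k, 0) | k. k*b \<le> m \<and> 3 dvd (m - k*b)}"
    unfolding K_def b_def by simp
  have F2: "F (2*m) = K"
  proof (rule set_eqI)
    fix x :: "nat \<times> nat \<times> nat"
    obtain e1 e2 e3 where x: "x = (e1,e2,e3)" by (cases x) auto
    have "x \<in> F (2*m) \<longleftrightarrow> (e1=0 \<and> e2=0 \<and> e3=2) \<or> (e3=0 \<and> 3*e1 + b*e2 = m)"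
      unfolding x Fmem using F2m[OF bpos assms(2) mb] by blast
    also have "\<dots> \<longleftrightarrow> (e1=0 \<and> e2=0 \<and> e3=2) \<or> (e3=0 \<and> e2*b \<le> m \<and> 3 dvd (m - e2*b) \<and> e1 = (m - e2*b) div 3)"
      using divlem[of e1 "b*e2" m] by (simp add: mult.commute)
    also have "\<dots> \<longleftrightarrow> x \<in> K" unfolding Keq x by auto
    finally show "x \<in> F (2*m) \<longleftrightarrow> x \<in> K" .
  qed
  have F6: "F (6*b) = {(b,0,0),(0,3,0)} \<union> (if C then {((3*b-m) div 3, 0, 2)} else {})"
  proof (rule set_eqI)
    fix x :: "nat \<times> nat \<times> nat"
    obtain e1 e2 e3 where x: "x = (e1,e2,e3)" by (cases x) auto
    have "x \<in> F (6*b) \<longleftrightarrow> (e1=b \<and> e2=0 \<and> e3=0) \<or> (e1=0 \<and> e2=3 \<and> e3=0)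
     \<or> (m \<le> 3*b \<and> 3 dvd m \<and> e1 = (3*b-m) div 3 \<and> e2=0 \<and> e3=2)"
      unfolding x Fmem using F6b[OF b3 assms(2) mb] by blast
    thus "x \<in> F (6*b) \<longleftrightarrow> x \<in> {(b,0,0),(0,3,0)} \<union> (if C then {((3*b-m) div 3, 0, 2)} else {})"
      unfolding Cb x by auto
  qed
  have x2: "x2 = 3" unfolding x2_def
  proof (rule Least_equality)
    show "1 \<le> (3::nat) \<and> (6 * \<alpha> + 2) * 3 \<in> gen2 6 m"
    proof -
      have "2*b*3 = b*6 + 0*m" by simp
      thus ?thesis unfolding gen2_def a2 mem_Collect_eq by (intro conjI) (simp, blast)
    qed
  next
    fix y assume "1 \<le> y \<and> (6 * \<alpha> + 2) * y \<in> gen2 6 m"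
    then obtain u v where "1 \<le> y" "2*b*y = u*6 + v*m" unfolding gen2_def a2 by auto
    thus "3 \<le> y" using LB2[OF b3 assms(2) mb, of y u v] by (simp add: mult.commute)
  qed
  have x3: "x3 = 2" unfolding x3_def
  proof (rule Least_equality)
    obtain u v where "2*m = 6*u + v*(6*\<alpha>+2)" using rep3[OF assms(3)] by blast
    thus "1 \<le> (2::nat) \<and> m * 2 \<in> gen2 6 (6 * \<alpha> + 2)"
      unfolding gen2_def by (auto simp: mult.commute)
  next
    fix y assume "1 \<le> y \<and> m * y \<in> gen2 6 (6 * \<alpha> + 2)"
    then obtain u v where "1 \<le> y" "m*y = u*6 + v*(2*b)" unfolding gen2_def a2 by auto
    thus "2 \<le> y" using LB3[OF assms(2), of y u v b] by (simp add: mult.commute)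
  qed
  have lb1: "6*b \<le> 6*y \<or> (3 dvd m \<and> 2*m \<le> 6*y)"
    if "1 \<le> y \<and> 6 * y \<in> gen2 (6 * \<alpha> + 2) m" for y
  proof -
    have "6 * y \<in> gen2 (2*b) m" using that a2 by simp
    then obtain u v where "6*y = u*(2*b) + v*m" unfolding gen2_def by blast
    moreover have "1 \<le> y" using that by simp
    ultimately show ?thesis using LB1[OF b3 assms(2) mb] by blast
  qed
  have x1: "x1 = (if C then m div 3 else b)" unfolding x1_def
  proof (rule Least_equality)
    show "1 \<le> (if C then m div 3 else b) \<and> 6 * (if C then m div 3 else b) \<in> gen2 (6 * \<alpha> + 2) m"
    proof (cases C)
      case True
      then obtain c where c: "m = 3*c" using Cb by auto
      hence "c \<ge> 1" using mb by simp
      moreover have "6*(m div 3) = 0*(6*\<alpha>+2) + 2*m" using c by simp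
      hence "6*(m div 3) \<in> gen2 (6*\<alpha>+2) m" unfolding gen2_def by blast
      ultimately show ?thesis using True c by simp
    next
      case False
      have "6*b = 3*(2*b) + 0*m" by simp
      hence "6*b \<in> gen2 (6*\<alpha>+2) m" unfolding gen2_def a2 by blast
      thus ?thesis using False bpos by simp
    qed
  next
    fix y assume y: "1 \<le> y \<and> 6 * y \<in> gen2 (6 * \<alpha> + 2) m"
    show "(if C then m div 3 else b) \<le> y"
      using lb1[OF y] Cb by auto
  qed
  have B2: "\<beta>2 = 6*b" unfolding \<beta>2_def x2 a2 by simp
  have B3: "\<beta>3 = 2*m" unfolding \<beta>3_def x3 by simp
  show ?thesis
  proof (cases C)
    case True
    have B1: "\<beta>1 = 2*m" unfolding \<beta>1_def x1 using True Cb by auto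
    have F6': "F (6*b) = {((3*b-m) div 3, 0, 2), (b,0,0), (0,3,0)}"
      using F6 True by auto
    show ?thesis unfolding a6 a9 b_def[symmetric] B1 B2 B3 F2 F6' using True by simp
  next
    case False
    have B1: "\<beta>1 = 6*b" unfolding \<beta>1_def x1 using False by simp
    have F6': "F (6*b) = {(b,0,0), (0,3,0)}"
      using F6 False by simp
    show ?thesis unfolding a6 a9 b_def[symmetric] B1 B2 B3 F2 F6' using False by simp
  qed
qed

end
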